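(* Let $(X,b)$ be a locally finite weighted graph, $F$ a Hermitian vector bundle over $X$, $\Phi$ a connection on $F$, $W$ a self-adjoint bundle endomorphism, and $\mathcal M=\mathcal M_{b,\Phi,W}\colon\Gamma(X;F)\to\Gamma(X;F)$. Then $\mathcal M$ is continuous and, identifying the continuous dual of $\Gamma(X;F)$ with $\Gamma_c(X;F)$ via the pairing $(\varphi,f)=\sum_x\langle\varphi(x),f(x)\rangle_x$, the dual operator of $\mathcal M$ is $\mathcal M|_{\Gamma_c(X;F)}$. In particular, $\mathcal M$ is surjective if and only if $\mathcal M|_{\Gamma_c(X;F)}$ is injective.
   Context: Weighted graph: $X$ countable, $b\colon X\times X\to[0,\infty)$ with $b(x,x)=0$, $b(x,y)=b(y,x)$, $\sum_y b(x,y)<\infty$; locally finite means each $x$ has only finitely many $y$ with $b(x,y)>0$. Hermitian vector bundle: family $F=(F_x)$ of finite-dimensional complex inner product spaces $\langle\cdot,\cdot\rangle_x$ (linear in second variable); $\Gamma(X;F)=\prod_xF_x$ with the product topology; $\Gamma_c(X;F)$ its finitely supported elements. Connection: unitary $\Phi_{xy}\colon F_y\to F_x$ with $\Phi_{yx}=\Phi_{xy}^{-1}$. Self-adjoint bundle endomorphism: self-adjoint $W(x)\colon F_x\to F_x$. $\mathcal M f(x)=\sum_y b(x,y)(f(x)-\Phi_{xy}f(y))+W(x)f(x)$. The dual operator $\mathcal M'$ on $\Gamma_c(X;F)$ is defined by $(\mathcal M'\varphi,f)=(\varphi,\mathcal Mf)$ for all $f\in\Gamma(X;F)$. *)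

theory Defs
  imports "HOL-Analysis.Analysis"
begin

text \<open>Hermitian vector bundle over X: the fibre over x is modelled (after choosing
an orthonormal basis) as C^(d x), i.e. functions nat => complex vanishing from
index d x on, with the standard inner product (linear in the second variable).\<close>

definition fib :: "nat \<Rightarrow> (nat \<Rightarrow> complex) set" where
  "fib n = {v. \<forall>i\<ge>n. v i = 0}"

definition finner :: "nat \<Rightarrow> (nat \<Rightarrow> complex) \<Rightarrow> (nat \<Rightarrow> complex) \<Rightarrow> complex" where
  "finner n u v = (\<Sum>i<n. cnj (u i) * v i)"

text \<open>Gamma(X;F), carrying the product topology (the subspace topology of the
product topology on functions), and Gamma_c(X;F).\<close>

definition sections :: "('x \<Rightarrow> nat) \<Rightarrow> ('x \<Rightarrow> nat \<Rightarrow> complex) set" where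
  "sections d = {f. \<forall>x. f x \<in> fib (d x)}"

definition csections :: "('x \<Rightarrow> nat) \<Rightarrow> ('x \<Rightarrow> nat \<Rightarrow> complex) set" where
  "csections d = {f \<in> sections d. finite {x. f x \<noteq> (\<lambda>_. 0)}}"

definition pairing :: "('x \<Rightarrow> nat) \<Rightarrow> ('x \<Rightarrow> nat \<Rightarrow> complex) \<Rightarrow> ('x \<Rightarrow> nat \<Rightarrow> complex) \<Rightarrow> complex" where
  "pairing d \<phi> f = (\<Sum>x\<in>{x. \<phi> x \<noteq> (\<lambda>_. 0)}. finner (d x) (\<phi> x) (f x))"

definition locally_finite_graph :: "('x \<Rightarrow> 'x \<Rightarrow> real) \<Rightarrow> bool" where
  "locally_finite_graph b \<longleftrightarrow>
     (\<forall>x y. 0 \<le> b x y) \<and> (\<forall>x. b x x = 0) \<and> (\<forall>x y. b x y = b y x)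
     \<and> (\<forall>x. finite {y. b x y \<noteq> 0})"

definition fib_linear :: "nat \<Rightarrow> ((nat \<Rightarrow> complex) \<Rightarrow> (nat \<Rightarrow> complex)) \<Rightarrow> bool" where
  "fib_linear n T \<longleftrightarrow>
     (\<forall>u\<in>fib n. \<forall>v\<in>fib n. T (\<lambda>i. u i + v i) = (\<lambda>i. T u i + T v i)) \<and>
     (\<forall>c. \<forall>u\<in>fib n. T (\<lambda>i. c * u i) = (\<lambda>i. c * T u i))"

definition connection :: "('x \<Rightarrow> 'x \<Rightarrow> real) \<Rightarrow> ('x \<Rightarrow> nat)
    \<Rightarrow> ('x \<Rightarrow> 'x \<Rightarrow> (nat \<Rightarrow> complex) \<Rightarrow> (nat \<Rightarrow> complex)) \<Rightarrow> bool" where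
  "connection b d \<Phi> \<longleftrightarrow>
     (\<forall>x y. 0 < b x y \<longrightarrow>
        fib_linear (d y) (\<Phi> x y) \<and>
        (\<forall>v\<in>fib (d y). \<Phi> x y v \<in> fib (d x)) \<and>
        (\<forall>u\<in>fib (d y). \<forall>v\<in>fib (d y). finner (d x) (\<Phi> x y u) (\<Phi> x y v) = finner (d y) u v) \<and>
        (\<forall>v\<in>fib (d y). \<Phi> y x (\<Phi> x y v) = v))"

definition selfadj_endo :: "('x \<Rightarrow> nat) \<Rightarrow> ('x \<Rightarrow> (nat \<Rightarrow> complex) \<Rightarrow> (nat \<Rightarrow> complex)) \<Rightarrow> bool" where
  "selfadj_endo d W \<longleftrightarrow>
     (\<forall>x. fib_linear (d x) (W x) \<and> (\<forall>v\<in>fib (d x). W x v \<in> fib (d x)) \<and>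
        (\<forall>u\<in>fib (d x). \<forall>v\<in>fib (d x). finner (d x) (W x u) v = finner (d x) u (W x v)))"

definition Mop :: "('x \<Rightarrow> 'x \<Rightarrow> real) \<Rightarrow> ('x \<Rightarrow> 'x \<Rightarrow> (nat \<Rightarrow> complex) \<Rightarrow> (nat \<Rightarrow> complex))
    \<Rightarrow> ('x \<Rightarrow> (nat \<Rightarrow> complex) \<Rightarrow> (nat \<Rightarrow> complex))
    \<Rightarrow> ('x \<Rightarrow> nat \<Rightarrow> complex) \<Rightarrow> ('x \<Rightarrow> nat \<Rightarrow> complex)" where
  "Mop b \<Phi> W f = (\<lambda>x i. (\<Sum>y\<in>{y. b x y \<noteq> 0}. complex_of_real (b x y) * (f x i - \<Phi> x y (f y) i))
                        + W x (f x) i)"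

end

theory Submission
  imports Defs
begin


lemma annih:
  fixes C :: "'c set"
  assumes "finite C"
  shows "\<And>R. (\<lambda>_. 0) \<in> R \<Longrightarrow> (\<forall>r\<in>R. \<forall>s\<in>R. \<forall>a::complex. (\<lambda>c. r c + a * s c) \<in> R)
     \<Longrightarrow> (\<forall>r\<in>R. \<forall>c. c \<notin> C \<longrightarrow> r c = 0)
     \<Longrightarrow> \<not> (\<forall>v. (\<forall>c. c \<notin> C \<longrightarrow> v c = 0) \<longrightarrow> v \<in> R)
     \<Longrightarrow> \<exists>\<phi>. (\<forall>c. c \<notin> C \<longrightarrow> \<phi> c = 0) \<and> \<phi> \<noteq> (\<lambda>_. 0) \<and> (\<forall>r\<in>R. (\<Sum>c\<in>C. \<phi> c * r c) = 0)"
  using assms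
proof (induction C rule: finite_induct)
  case empty
  from empty.prems(4) obtain v where "\<forall>c. v c = 0" "v \<notin> R" by auto
  then have "v = (\<lambda>_. 0)" by auto
  with empty.prems(1) \<open>v \<notin> R\<close> show ?case by simp
next
  case (insert c0 C R)
  show ?case
  proof (cases "\<forall>r\<in>R. r c0 = 0")
    case True
    show ?thesis
      apply (rule exI[of _ "\<lambda>c. if c = c0 then 1 else 0"])
      using True insert.hyps apply (auto simp: fun_eq_iff)
      apply (subst sum.neutral) apply auto done
  next
    case False
    then obtain r0 where r0: "r0 \<in> R" "r0 c0 \<noteq> 0" by auto
    define R' where "R' = (\<lambda>r. (\<lambda>c. r c - (r c0 / r0 c0) * r0 c)) ` R"
    have z: "(\<lambda>_. 0) \<in> R'" unfolding R'_def using insert.prems(1) by (auto intro!: image_eqI[of _ _ "\<lambda>_. 0"])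
    have cl: "\<forall>r\<in>R'. \<forall>s\<in>R'. \<forall>a::complex. (\<lambda>c. r c + a * s c) \<in> R'"
    proof (intro ballI allI)
      fix r s a assume "r \<in> R'" "s \<in> R'"
      then obtain r1 s1 where rs: "r1 \<in> R" "s1 \<in> R" "r = (\<lambda>c. r1 c - (r1 c0 / r0 c0) * r0 c)"
        "s = (\<lambda>c. s1 c - (s1 c0 / r0 c0) * r0 c)" unfolding R'_def by auto
      have m: "(\<lambda>c. r1 c + a * s1 c) \<in> R" using insert.prems(2) rs by auto
      have "(\<lambda>c. r c + a * s c) = (\<lambda>c. (r1 c + a * s1 c) - ((r1 c0 + a * s1 c0) / r0 c0) * r0 c)"
        using r0 unfolding rs(3,4) by (simp add: fun_eq_iff field_simps)
      then show "(\<lambda>c. r c + a * s c) \<in> R'" unfolding R'_def using m by force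
    qed
    have van: "\<forall>r\<in>R'. \<forall>c. c \<notin> C \<longrightarrow> r c = 0"
    proof (intro ballI allI impI)
      fix r c assume "r \<in> R'" "c \<notin> C"
      then obtain r1 where "r1 \<in> R" "r = (\<lambda>c. r1 c - (r1 c0 / r0 c0) * r0 c)" unfolding R'_def by auto
      then show "r c = 0" using insert.prems(3)[rule_format, OF \<open>r1 \<in> R\<close>, of c]
          insert.prems(3)[rule_format, OF r0(1), of c] r0 \<open>c \<notin> C\<close> by (cases "c = c0") auto
    qed
    have notall: "\<not> (\<forall>v. (\<forall>c. c \<notin> C \<longrightarrow> v c = 0) \<longrightarrow> v \<in> R')"
    proof
      assume H: "\<forall>v. (\<forall>c. c \<notin> C \<longrightarrow> v c = 0) \<longrightarrow> v \<in> R'"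
      have "v \<in> R" if v: "\<forall>c. c \<notin> insert c0 C \<longrightarrow> v c = 0" for v
      proof -
        have "(\<lambda>c. v c - (v c0 / r0 c0) * r0 c) \<in> R'"
        proof (rule H[rule_format])
          fix c assume "c \<notin> C"
          then show "v c - (v c0 / r0 c0) * r0 c = 0"
            using v insert.prems(3)[rule_format, OF r0(1), of c] r0 by (cases "c = c0") auto
        qed
        then obtain r where r: "r \<in> R" "(\<lambda>c. v c - (v c0 / r0 c0) * r0 c) = (\<lambda>c. r c - (r c0 / r0 c0) * r0 c)"
          unfolding R'_def by auto
        have "v = (\<lambda>c. r c + (v c0 / r0 c0 - r c0 / r0 c0) * r0 c)"
        proof
          fix c show "v c = r c + (v c0 / r0 c0 - r c0 / r0 c0) * r0 c"
            using fun_cong[OF r(2), of c] by (simp add: algebra_simps)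
        qed
        moreover have "(\<lambda>c. r c + (v c0 / r0 c0 - r c0 / r0 c0) * r0 c) \<in> R"
          using insert.prems(2) r(1) r0(1) by blast
        ultimately show ?thesis by simp
      qed
      then show False using insert.prems(4) by blast
    qed
    obtain \<phi>' where \<phi>': "\<forall>c. c \<notin> C \<longrightarrow> \<phi>' c = 0" "\<phi>' \<noteq> (\<lambda>_. 0)" "\<forall>r\<in>R'. (\<Sum>c\<in>C. \<phi>' c * r c) = 0"
      using insert.IH[OF z cl van notall] by blast
    define S where "S = (\<Sum>c\<in>C. \<phi>' c * r0 c)"
    define \<phi> where "\<phi> = \<phi>'(c0 := - S / r0 c0)"
    show ?thesis
    proof (intro exI conjI)
      show "\<forall>c. c \<notin> insert c0 C \<longrightarrow> \<phi> c = 0" using \<phi>' unfolding \<phi>_def by auto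
      show "\<phi> \<noteq> (\<lambda>_. 0)"
      proof
        assume "\<phi> = (\<lambda>_. 0)"
        then have "\<forall>c. \<phi>' c = 0" using \<phi>'(1) insert.hyps unfolding \<phi>_def
          by (metis fun_upd_other)
        then show False using \<phi>'(2) by auto
      qed
      show "\<forall>r\<in>R. (\<Sum>c\<in>insert c0 C. \<phi> c * r c) = 0"
      proof
        fix r assume r: "r \<in> R"
        have "(\<lambda>c. r c - (r c0 / r0 c0) * r0 c) \<in> R'" unfolding R'_def using r by auto
        then have "(\<Sum>c\<in>C. \<phi>' c * (r c - (r c0 / r0 c0) * r0 c)) = 0" using \<phi>'(3) by auto
        then have e: "(\<Sum>c\<in>C. \<phi>' c * r c) = (r c0 / r0 c0) * S"
          unfolding S_def by (simp add: algebra_simps sum_subtractf sum_distrib_left)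
        have "(\<Sum>c\<in>insert c0 C. \<phi> c * r c) = \<phi> c0 * r c0 + (\<Sum>c\<in>C. \<phi> c * r c)"
          using insert.hyps by simp
        also have "(\<Sum>c\<in>C. \<phi> c * r c) = (\<Sum>c\<in>C. \<phi>' c * r c)"
          using insert.hyps unfolding \<phi>_def by (intro sum.cong) auto
        finally show "(\<Sum>c\<in>insert c0 C. \<phi> c * r c) = 0"
          using e r0 unfolding \<phi>_def by (simp add: divide_simps)
      qed
    qed
  qed
qed



lemma antimono_sets:
  fixes A :: "nat \<Rightarrow> 'a set"
  assumes "\<And>n. A (Suc n) \<subseteq> A n" "m \<le> n"
  shows "A n \<subseteq> A m"
  using lift_Suc_antimono_le[of A, OF assms(1) assms(2)] by simp

lemma affine_inter:
  fixes C :: "'c set"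
  assumes "finite C"
  shows "\<And>A :: nat \<Rightarrow> ('c \<Rightarrow> complex) set. (\<forall>n. A n \<noteq> {}) \<Longrightarrow> (\<forall>n. A (Suc n) \<subseteq> A n)
     \<Longrightarrow> (\<forall>n. \<forall>v\<in>A n. \<forall>w\<in>A n. \<forall>t. (\<lambda>c. v c + t * (w c - v c)) \<in> A n)
     \<Longrightarrow> (\<forall>v\<in>A 0. \<forall>w\<in>A 0. \<forall>c. c \<notin> C \<longrightarrow> v c = w c)
     \<Longrightarrow> \<exists>v. \<forall>n. v \<in> A n"
  using assms
proof (induction C rule: finite_induct)
  case (empty A)
  obtain v where v: "v \<in> A 0" using empty.prems(1) by blast
  have "v \<in> A n" for n
  proof -
    obtain w where w: "w \<in> A n" using empty.prems(1) by blast
    have "A n \<subseteq> A 0" using antimono_sets[of A 0 n] empty.prems(2) by auto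
    then have "w = v" using empty.prems(4) v w by (auto simp: fun_eq_iff)
    then show ?thesis using w by simp
  qed
  then show ?case by blast
next
  case (insert c0 C A)
  show ?case
  proof (cases "\<forall>n. \<exists>v\<in>A n. \<exists>w\<in>A n. v c0 \<noteq> w c0")
    case True
    define B where "B = (\<lambda>n. {u \<in> A n. u c0 = 0})"
    have ne: "\<forall>n. B n \<noteq> {}"
    proof
      fix n
      obtain v w where vw: "v \<in> A n" "w \<in> A n" "v c0 \<noteq> w c0" using True by blast
      define t where "t = - v c0 / (w c0 - v c0)"
      have "(\<lambda>c. v c + t * (w c - v c)) \<in> A n" using insert.prems(3) vw by blast
      moreover have "v c0 + t * (w c0 - v c0) = 0" using vw(3) unfolding t_def by (simp add: field_simps)
      ultimately show "B n \<noteq> {}" unfolding B_def by auto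
    qed
    have dec: "\<forall>n. B (Suc n) \<subseteq> B n" using insert.prems(2) unfolding B_def by auto
    have aff: "\<forall>n. \<forall>v\<in>B n. \<forall>w\<in>B n. \<forall>t. (\<lambda>c. v c + t * (w c - v c)) \<in> B n"
      using insert.prems(3) unfolding B_def by auto
    have agr: "\<forall>v\<in>B 0. \<forall>w\<in>B 0. \<forall>c. c \<notin> C \<longrightarrow> v c = w c"
    proof (intro ballI allI impI)
      fix v w c assume "v \<in> B 0" "w \<in> B 0" "c \<notin> C"
      then show "v c = w c" using insert.prems(4) unfolding B_def
        by (cases "c = c0") auto
    qed
    obtain v where "\<forall>n. v \<in> B n" using insert.IH[OF ne dec aff agr] by blast
    then show ?thesis unfolding B_def by blast
  next
    case False
    then obtain N where N: "\<forall>v\<in>A N. \<forall>w\<in>A N. v c0 = w c0" by blast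
    define B where "B = (\<lambda>n. A (N + n))"
    have ne: "\<forall>n. B n \<noteq> {}" using insert.prems(1) unfolding B_def by auto
    have dec: "\<forall>n. B (Suc n) \<subseteq> B n" using insert.prems(2) unfolding B_def by auto
    have aff: "\<forall>n. \<forall>v\<in>B n. \<forall>w\<in>B n. \<forall>t. (\<lambda>c. v c + t * (w c - v c)) \<in> B n"
      using insert.prems(3) unfolding B_def by auto
    have sub: "A N \<subseteq> A 0" using antimono_sets[of A 0 N] insert.prems(2) by auto
    have agr: "\<forall>v\<in>B 0. \<forall>w\<in>B 0. \<forall>c. c \<notin> C \<longrightarrow> v c = w c"
    proof (intro ballI allI impI)
      fix v w c assume "v \<in> B 0" "w \<in> B 0" "c \<notin> C"
      then have "v \<in> A 0" "w \<in> A 0" "v \<in> A N" "w \<in> A N" using sub unfolding B_def by auto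
      then show "v c = w c" using N insert.prems(4) \<open>c \<notin> C\<close>
        by (cases "c = c0") auto
    qed
    obtain v where v: "\<forall>n. v \<in> B n" using insert.IH[OF ne dec aff agr] by blast
    have "v \<in> A n" for n
      using v[rule_format, of n] antimono_sets[of A n "N + n"] insert.prems(2) unfolding B_def by auto
    then show ?thesis by blast
  qed
qed



lemma fib_comb: "u \<in> fib n \<Longrightarrow> v \<in> fib n \<Longrightarrow> (\<lambda>i. a * u i + c * v i) \<in> fib n"
  by (auto simp: fib_def)

lemma fib_zero: "(\<lambda>_. 0) \<in> fib n"
  by (auto simp: fib_def)

lemma fib_lin_add: "fib_linear n T \<Longrightarrow> u \<in> fib n \<Longrightarrow> v \<in> fib n \<Longrightarrow> T (\<lambda>i. u i + v i) = (\<lambda>i. T u i + T v i)"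
  unfolding fib_linear_def by blast
lemma fib_lin_scale: "fib_linear n T \<Longrightarrow> u \<in> fib n \<Longrightarrow> T (\<lambda>i. c * u i) = (\<lambda>i. c * T u i)"
  unfolding fib_linear_def by blast

lemma fib_lin_comb:
  assumes "fib_linear n T" "u \<in> fib n" "v \<in> fib n"
  shows "T (\<lambda>i. a * u i + c * v i) = (\<lambda>i. a * T u i + c * T v i)"
proof -
  have au: "(\<lambda>i. a * u i) \<in> fib n" "(\<lambda>i. c * v i) \<in> fib n" using assms by (auto simp: fib_def)
  have "T (\<lambda>i. a * u i + c * v i) = (\<lambda>i. T (\<lambda>i. a * u i) i + T (\<lambda>i. c * v i) i)"
    using fib_lin_add[OF assms(1) au] by simp
  also have "\<dots> = (\<lambda>i. a * T u i + c * T v i)"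
    using fib_lin_scale[OF assms(1) assms(2), of a] fib_lin_scale[OF assms(1) assms(3), of c] by simp
  finally show ?thesis .
qed

lemma fib_lin_zero:
  assumes "fib_linear n T"
  shows "T (\<lambda>_. 0) = (\<lambda>_. 0)"
proof -
  have "T (\<lambda>i. 0 * (\<lambda>_. 0) i) = (\<lambda>i. 0 * T (\<lambda>_. 0) i)"
    using fib_lin_scale[OF assms fib_zero[of n], of 0] by simp
  then show ?thesis by simp
qed

lemma fib_expand:
  assumes "fib_linear n T" "v \<in> fib n"
  shows "T v = (\<lambda>i. \<Sum>j<n. v j * T (\<lambda>k. if k = j then 1 else 0) i)"
proof -
  have e: "(\<lambda>k. if k = j then 1 else 0) \<in> fib n" if "j < n" for j
    using that by (auto simp: fib_def)
  have "k \<le> n \<Longrightarrow> T (\<lambda>i. if i < k then v i else 0) = (\<lambda>i. \<Sum>j<k. v j * T (\<lambda>k. if k = j then 1 else 0) i)" for k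
  proof (induction k)
    case 0
    then show ?case using fib_lin_zero[OF assms(1)] by simp
  next
    case (Suc k)
    have tk: "(\<lambda>i. if i < k then v i else 0) \<in> fib n" using Suc.prems by (auto simp: fib_def)
    have "(\<lambda>i. if i < Suc k then v i else 0) = (\<lambda>i. 1 * (if i < k then v i else 0) + v k * (if i = k then 1 else 0))"
      by (auto simp: fun_eq_iff less_Suc_eq)
    then have "T (\<lambda>i. if i < Suc k then v i else 0) =
       (\<lambda>i. 1 * T (\<lambda>i. if i < k then v i else 0) i + v k * T (\<lambda>i. if i = k then 1 else 0) i)"
      using fib_lin_comb[OF assms(1) tk e[of k], of 1 "v k"] Suc.prems by simp
    then show ?case using Suc by simp
  qed
  from this[of n] have "T (\<lambda>i. if i < n then v i else 0) = (\<lambda>i. \<Sum>j<n. v j * T (\<lambda>k. if k = j then 1 else 0) i)" by simp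
  moreover have "(\<lambda>i. if i < n then v i else 0) = v" using assms(2) by (auto simp: fib_def fun_eq_iff)
  ultimately show ?thesis by simp
qed

lemma finner_sum_left: "finner n (\<lambda>i. \<Sum>y\<in>A. u y i) v = (\<Sum>y\<in>A. finner n (u y) v)"
  unfolding finner_def by (simp add: sum_distrib_right sum.swap[of _ A])

lemma finner_sum_right: "finner n v (\<lambda>i. \<Sum>y\<in>A. u y i) = (\<Sum>y\<in>A. finner n v (u y))"
  unfolding finner_def by (simp add: sum_distrib_left sum.swap[of _ A])

lemma finner_add_left: "finner n (\<lambda>i. u i + w i) v = finner n u v + finner n w v"
  unfolding finner_def by (simp add: algebra_simps sum.distrib)
lemma finner_add_right: "finner n v (\<lambda>i. u i + w i) = finner n v u + finner n v w"
  unfolding finner_def by (simp add: algebra_simps sum.distrib)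
lemma finner_diff_left: "finner n (\<lambda>i. u i - w i) v = finner n u v - finner n w v"
  unfolding finner_def by (simp add: algebra_simps sum_subtractf)
lemma finner_diff_right: "finner n v (\<lambda>i. u i - w i) = finner n v u - finner n v w"
  unfolding finner_def by (simp add: algebra_simps sum_subtractf)
lemma finner_real_left: "finner n (\<lambda>i. complex_of_real r * u i) v = complex_of_real r * finner n u v"
  unfolding finner_def by (simp add: sum_distrib_left algebra_simps)
lemma finner_real_right: "finner n v (\<lambda>i. complex_of_real r * u i) = complex_of_real r * finner n v u"
  unfolding finner_def by (simp add: sum_distrib_left algebra_simps)
lemma finner_zero_left: "finner n (\<lambda>_. 0) v = 0"
  unfolding finner_def by simp

lemma finner_self: "finner n u u = complex_of_real (\<Sum>i<n. (cmod (u i))^2)"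
proof -
  have "cnj (u i) * u i = complex_of_real ((cmod (u i))^2)" for i
    using complex_norm_square[of "u i"] by (simp add: mult.commute)
  then show ?thesis unfolding finner_def by simp
qed

lemma finner_self_zero:
  assumes "u \<in> fib n" "finner n u u = 0"
  shows "u = (\<lambda>_. 0)"
proof
  fix i
  have "complex_of_real (\<Sum>i<n. (cmod (u i))^2) = 0" using assms(2) by (simp only: finner_self)
  then have "(\<Sum>i<n. (cmod (u i))^2) = 0" by (simp only: of_real_eq_0_iff)
  then have "\<forall>i<n. (cmod (u i))^2 = 0" by (subst (asm) sum_nonneg_eq_0_iff) auto
  then show "u i = 0" using assms(1) by (cases "i < n") (auto simp: fib_def)
qed



locale gM =
  fixes b :: "'x \<Rightarrow> 'x \<Rightarrow> real"
    and d :: "'x \<Rightarrow> nat"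
    and \<Phi> :: "'x \<Rightarrow> 'x \<Rightarrow> (nat \<Rightarrow> complex) \<Rightarrow> (nat \<Rightarrow> complex)"
    and W :: "'x \<Rightarrow> (nat \<Rightarrow> complex) \<Rightarrow> (nat \<Rightarrow> complex)"
  assumes G: "locally_finite_graph b"
    and CN: "connection b d \<Phi>"
    and SA: "selfadj_endo d W"

context gM
begin

lemma nbr_finite: "finite {y. b x y \<noteq> 0}"
  using G unfolding locally_finite_graph_def by auto

lemma b_sym: "b x y = b y x"
  using G unfolding locally_finite_graph_def by auto

lemma b_pos: "b x y \<noteq> 0 \<Longrightarrow> 0 < b x y"
  using G unfolding locally_finite_graph_def by (metis less_eq_real_def)

lemma Phi_lin: "b x y \<noteq> 0 \<Longrightarrow> fib_linear (d y) (\<Phi> x y)"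
  using CN b_pos unfolding connection_def by blast

lemma Phi_fib: "b x y \<noteq> 0 \<Longrightarrow> v \<in> fib (d y) \<Longrightarrow> \<Phi> x y v \<in> fib (d x)"
  using CN b_pos unfolding connection_def by blast

lemma Phi_unit: "b x y \<noteq> 0 \<Longrightarrow> u \<in> fib (d y) \<Longrightarrow> v \<in> fib (d y) \<Longrightarrow>
    finner (d x) (\<Phi> x y u) (\<Phi> x y v) = finner (d y) u v"
  using CN b_pos unfolding connection_def by blast

lemma Phi_inv: "b x y \<noteq> 0 \<Longrightarrow> v \<in> fib (d y) \<Longrightarrow> \<Phi> y x (\<Phi> x y v) = v"
  using CN b_pos unfolding connection_def by blast

lemma Phi_adj:
  assumes "b x y \<noteq> 0" "u \<in> fib (d y)" "v \<in> fib (d x)"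
  shows "finner (d x) (\<Phi> x y u) v = finner (d y) u (\<Phi> y x v)"
proof -
  have byx: "b y x \<noteq> 0" using assms(1) b_sym by simp
  have "v = \<Phi> x y (\<Phi> y x v)" using Phi_inv[OF byx assms(3)] by simp
  then have "finner (d x) (\<Phi> x y u) v = finner (d x) (\<Phi> x y u) (\<Phi> x y (\<Phi> y x v))" by simp
  also have "\<dots> = finner (d y) u (\<Phi> y x v)"
    using Phi_unit[OF assms(1) assms(2) Phi_fib[OF byx assms(3)]] .
  finally show ?thesis .
qed

lemma W_lin: "fib_linear (d x) (W x)"
  using SA unfolding selfadj_endo_def by blast
lemma W_fib: "v \<in> fib (d x) \<Longrightarrow> W x v \<in> fib (d x)"
  using SA unfolding selfadj_endo_def by blast
lemma W_adj: "u \<in> fib (d x) \<Longrightarrow> v \<in> fib (d x) \<Longrightarrow> finner (d x) (W x u) v = finner (d x) u (W x v)"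
  using SA unfolding selfadj_endo_def by blast

lemma sec_fib: "f \<in> sections d \<Longrightarrow> f x \<in> fib (d x)"
  unfolding sections_def by auto

lemma M_sections: "f \<in> sections d \<Longrightarrow> Mop b \<Phi> W f \<in> sections d"
proof -
  assume f: "f \<in> sections d"
  have "Mop b \<Phi> W f x i = 0" if "i \<ge> d x" for x i
  proof -
    have "\<forall>y\<in>{y. b x y \<noteq> 0}. complex_of_real (b x y) * (f x i - \<Phi> x y (f y) i) = 0"
      using Phi_fib[OF _ sec_fib[OF f]] sec_fib[OF f, of x] that by (auto simp: fib_def)
    moreover have "W x (f x) i = 0" using W_fib[OF sec_fib[OF f, of x]] that by (auto simp: fib_def)
    ultimately show ?thesis unfolding Mop_def by simp
  qed
  then show ?thesis unfolding sections_def fib_def by auto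
qed

lemma M_lin:
  assumes f: "f \<in> sections d" and h: "h \<in> sections d"
  shows "Mop b \<Phi> W (\<lambda>x i. a * f x i + c * h x i) = (\<lambda>x i. a * Mop b \<Phi> W f x i + c * Mop b \<Phi> W h x i)"
proof (intro ext)
  fix x i
  have P: "\<Phi> x y (\<lambda>i. a * f y i + c * h y i) i = a * \<Phi> x y (f y) i + c * \<Phi> x y (h y) i"
    if "y \<in> {y. b x y \<noteq> 0}" for y
    using fib_lin_comb[OF Phi_lin sec_fib[OF f] sec_fib[OF h], of x y a c] that by simp
  have Wl: "W x (\<lambda>i. a * f x i + c * h x i) i = a * W x (f x) i + c * W x (h x) i"
    using fib_lin_comb[OF W_lin sec_fib[OF f] sec_fib[OF h], of x a c] by simp
  have "Mop b \<Phi> W (\<lambda>x i. a * f x i + c * h x i) x i =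
     (\<Sum>y\<in>{y. b x y \<noteq> 0}. a * (complex_of_real (b x y) * (f x i - \<Phi> x y (f y) i))
        + c * (complex_of_real (b x y) * (h x i - \<Phi> x y (h y) i)))
     + (a * W x (f x) i + c * W x (h x) i)"
    unfolding Mop_def using P Wl by (simp add: algebra_simps)
  also have "\<dots> = a * Mop b \<Phi> W f x i + c * Mop b \<Phi> W h x i"
    unfolding Mop_def sum.distrib distrib_left sum_distrib_left by (simp add: add_ac)
  finally show "Mop b \<Phi> W (\<lambda>x i. a * f x i + c * h x i) x i = a * Mop b \<Phi> W f x i + c * Mop b \<Phi> W h x i" .
qed

lemma M_local:
  assumes "\<And>y. y = x \<or> b x y \<noteq> 0 \<Longrightarrow> f y = h y"
  shows "Mop b \<Phi> W f x = Mop b \<Phi> W h x"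
  unfolding Mop_def using assms by (auto intro!: sum.cong ext)

lemma M_zero: "Mop b \<Phi> W (\<lambda>_ _. 0) = (\<lambda>_ _. 0)"
proof -
  have "(\<lambda>_ _. 0) \<in> sections d" unfolding sections_def fib_def by simp
  from M_lin[OF this this, of 0 0] show ?thesis by simp
qed

end



lemma pairing_superset:
  assumes "finite K" "{x. \<phi> x \<noteq> (\<lambda>_. 0)} \<subseteq> K"
  shows "pairing d \<phi> f = (\<Sum>x\<in>K. finner (d x) (\<phi> x) (f x))"
  unfolding pairing_def
  by (rule sum.mono_neutral_left) (use assms in \<open>auto simp: finner_zero_left\<close>)

lemma cont_coord: "continuous_on S (\<lambda>f::'x \<Rightarrow> nat \<Rightarrow> complex. f x i)"
proof -
  have "continuous_on S (\<lambda>f::'x \<Rightarrow> nat \<Rightarrow> complex. f x)"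
    by (rule continuous_on_subset[OF continuous_on_product_coordinates]) simp
  then show ?thesis by (rule continuous_on_product_then_coordinatewise)
qed

context gM
begin

lemma M_supp:
  assumes "\<phi> \<in> sections d"
  shows "{x. Mop b \<Phi> W \<phi> x \<noteq> (\<lambda>_. 0)} \<subseteq> {x. \<phi> x \<noteq> (\<lambda>_. 0)} \<union> (\<Union>y\<in>{x. \<phi> x \<noteq> (\<lambda>_. 0)}. {x. b y x \<noteq> 0})"
proof
  fix x assume x: "x \<in> {x. Mop b \<Phi> W \<phi> x \<noteq> (\<lambda>_. 0)}"
  show "x \<in> {x. \<phi> x \<noteq> (\<lambda>_. 0)} \<union> (\<Union>y\<in>{x. \<phi> x \<noteq> (\<lambda>_. 0)}. {x. b y x \<noteq> 0})"
  proof (rule ccontr)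
    assume n: "\<not> ?thesis"
    have "\<phi> y = (\<lambda>_ _. 0) y" if "y = x \<or> b x y \<noteq> 0" for y
      using n that b_sym[of x y] by auto
    then have "Mop b \<Phi> W \<phi> x = Mop b \<Phi> W (\<lambda>_ _. 0) x" by (rule M_local)
    then show False using x M_zero by simp
  qed
qed

lemma M_csections: "\<phi> \<in> csections d \<Longrightarrow> Mop b \<Phi> W \<phi> \<in> csections d"
proof -
  assume p: "\<phi> \<in> csections d"
  then have s: "\<phi> \<in> sections d" and f: "finite {x. \<phi> x \<noteq> (\<lambda>_. 0)}" unfolding csections_def by auto
  have "finite ({x. \<phi> x \<noteq> (\<lambda>_. 0)} \<union> (\<Union>y\<in>{x. \<phi> x \<noteq> (\<lambda>_. 0)}. {x. b y x \<noteq> 0}))"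
    using f nbr_finite by auto
  then have "finite {x. Mop b \<Phi> W \<phi> x \<noteq> (\<lambda>_. 0)}" using M_supp[OF s] finite_subset by blast
  then show ?thesis using M_sections[OF s] unfolding csections_def by auto
qed

lemma M_cont: "continuous_on (sections d) (Mop b \<Phi> W)"
proof (intro continuous_on_coordinatewise_then_product)
  fix x i
  let ?e = "\<lambda>j k. if k = j then 1 else (0::complex)"
  have "continuous_on (sections d) (\<lambda>f. (\<Sum>y\<in>{y. b x y \<noteq> 0}. complex_of_real (b x y) *
       (f x i - (\<Sum>j<d y. f y j * \<Phi> x y (?e j) i))) + (\<Sum>j<d x. f x j * W x (?e j) i))"
    by (intro continuous_intros cont_coord)
  moreover have "(\<Sum>y\<in>{y. b x y \<noteq> 0}. complex_of_real (b x y) *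
       (f x i - (\<Sum>j<d y. f y j * \<Phi> x y (?e j) i))) + (\<Sum>j<d x. f x j * W x (?e j) i)
     = Mop b \<Phi> W f x i" if f: "f \<in> sections d" for f
  proof -
    have "\<Phi> x y (f y) i = (\<Sum>j<d y. f y j * \<Phi> x y (?e j) i)" if "y \<in> {y. b x y \<noteq> 0}" for y
      using fib_expand[OF Phi_lin sec_fib[OF f], of x y] that by simp
    moreover have "W x (f x) i = (\<Sum>j<d x. f x j * W x (?e j) i)"
      using fib_expand[OF W_lin sec_fib[OF f], of x] by simp
    ultimately show ?thesis unfolding Mop_def by simp
  qed
  ultimately show "continuous_on (sections d) (\<lambda>f. Mop b \<Phi> W f x i)"
    using continuous_on_cong by (smt (verit))
qed

end



context gM
begin

lemma finner_M_left:
  "finner (d x) (Mop b \<Phi> W \<phi> x) v = (\<Sum>y\<in>{y. b x y \<noteq> 0}. complex_of_real (b x y) *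
      (finner (d x) (\<phi> x) v - finner (d x) (\<Phi> x y (\<phi> y)) v)) + finner (d x) (W x (\<phi> x)) v"
  unfolding Mop_def by (simp only: finner_add_left finner_sum_left finner_real_left finner_diff_left)

lemma finner_M_right:
  "finner (d x) v (Mop b \<Phi> W f x) = (\<Sum>y\<in>{y. b x y \<noteq> 0}. complex_of_real (b x y) *
      (finner (d x) v (f x) - finner (d x) v (\<Phi> x y (f y)))) + finner (d x) v (W x (f x))"
  unfolding Mop_def by (simp only: finner_add_right finner_sum_right finner_real_right finner_diff_right)

lemma sumN:
  assumes "finite Q" "\<And>y. b x y \<noteq> 0 \<Longrightarrow> y \<notin> Q \<Longrightarrow> g y = 0"
  shows "(\<Sum>y\<in>{y. b x y \<noteq> 0}. g y) = (\<Sum>y\<in>Q. if b x y \<noteq> 0 then g y else 0)"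
proof -
  have "(\<Sum>y\<in>{y. b x y \<noteq> 0}. g y) = (\<Sum>y\<in>{y. b x y \<noteq> 0} \<inter> Q. g y)"
    by (rule sum.mono_neutral_right) (use assms nbr_finite in auto)
  also have "\<dots> = (\<Sum>y\<in>Q. if b x y \<noteq> 0 then g y else 0)"
    unfolding sum.inter_filter[OF assms(1), symmetric]
    by (rule sum.cong) auto
  finally show ?thesis .
qed

lemma pairing_M:
  assumes p: "\<phi> \<in> csections d" and f: "f \<in> sections d"
  shows "pairing d (Mop b \<Phi> W \<phi>) f = pairing d \<phi> (Mop b \<Phi> W f)"
proof -
  define P where "P = {x. \<phi> x \<noteq> (\<lambda>_. 0)}"
  define Q where "Q = P \<union> (\<Union>y\<in>P. {x. b y x \<noteq> 0})"
  have ps: "\<phi> \<in> sections d" and fP: "finite P" using p unfolding csections_def P_def by auto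
  have fQ: "finite Q" unfolding Q_def using fP nbr_finite by auto
  have PQ: "P \<subseteq> Q" unfolding Q_def by auto
  have MQ: "{x. Mop b \<Phi> W \<phi> x \<noteq> (\<lambda>_. 0)} \<subseteq> Q" using M_supp[OF ps] unfolding Q_def P_def .
  have zero: "\<phi> x = (\<lambda>_. 0)" if "x \<notin> P" for x using that unfolding P_def by auto
  define h where "h = (\<lambda>x y. complex_of_real (b x y) * finner (d x) (\<phi> x) (\<Phi> x y (f y)))"
  have h0: "h x y = 0" if "x \<notin> P" for x y unfolding h_def using zero[OF that] by (simp add: finner_zero_left)
  have L1: "(\<Sum>y\<in>{y. b x y \<noteq> 0}. complex_of_real (b x y) * finner (d x) (\<Phi> x y (\<phi> y)) (f x))
        = (\<Sum>y\<in>Q. if b x y \<noteq> 0 then h y x else 0)" for x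
  proof -
    have "(\<Sum>y\<in>{y. b x y \<noteq> 0}. complex_of_real (b x y) * finner (d x) (\<Phi> x y (\<phi> y)) (f x))
        = (\<Sum>y\<in>{y. b x y \<noteq> 0}. h y x)"
      unfolding h_def using Phi_adj[OF _ sec_fib[OF ps] sec_fib[OF f]] b_sym by (intro sum.cong) auto
    also have "\<dots> = (\<Sum>y\<in>Q. if b x y \<noteq> 0 then h y x else 0)"
      by (rule sumN[OF fQ]) (use h0 PQ in auto)
    finally show ?thesis .
  qed
  have R1: "(\<Sum>y\<in>{y. b x y \<noteq> 0}. complex_of_real (b x y) * finner (d x) (\<phi> x) (\<Phi> x y (f y)))
        = (\<Sum>y\<in>Q. if b x y \<noteq> 0 then h x y else 0)" for x
  proof -
    have "(\<Sum>y\<in>{y. b x y \<noteq> 0}. h x y) = (\<Sum>y\<in>Q. if b x y \<noteq> 0 then h x y else 0)"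
    proof (rule sumN[OF fQ])
      fix y assume "b x y \<noteq> 0" "y \<notin> Q"
      then have "x \<notin> P" unfolding Q_def using b_sym[of x y] by auto
      then show "h x y = 0" by (rule h0)
    qed
    then show ?thesis unfolding h_def .
  qed
  have swap: "(\<Sum>x\<in>Q. \<Sum>y\<in>Q. if b x y \<noteq> 0 then h y x else 0) = (\<Sum>x\<in>Q. \<Sum>y\<in>Q. if b x y \<noteq> 0 then h x y else 0)"
    by (subst sum.swap) (simp add: b_sym)
  have "pairing d (Mop b \<Phi> W \<phi>) f = (\<Sum>x\<in>Q. finner (d x) (Mop b \<Phi> W \<phi> x) (f x))"
    by (rule pairing_superset[OF fQ MQ])
  also have "\<dots> = (\<Sum>x\<in>Q. (\<Sum>y\<in>{y. b x y \<noteq> 0}. complex_of_real (b x y) * finner (d x) (\<phi> x) (f x))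
       - (\<Sum>y\<in>Q. if b x y \<noteq> 0 then h y x else 0) + finner (d x) (W x (\<phi> x)) (f x))"
    unfolding finner_M_left L1[symmetric] by (simp add: right_diff_distrib sum_subtractf)
  also have "\<dots> = (\<Sum>x\<in>Q. (\<Sum>y\<in>{y. b x y \<noteq> 0}. complex_of_real (b x y) * finner (d x) (\<phi> x) (f x)))
       - (\<Sum>x\<in>Q. \<Sum>y\<in>Q. if b x y \<noteq> 0 then h y x else 0) + (\<Sum>x\<in>Q. finner (d x) (W x (\<phi> x)) (f x))"
    by (simp add: sum.distrib sum_subtractf)
  also have "\<dots> = (\<Sum>x\<in>Q. (\<Sum>y\<in>{y. b x y \<noteq> 0}. complex_of_real (b x y) * finner (d x) (\<phi> x) (f x)))
       - (\<Sum>x\<in>Q. \<Sum>y\<in>Q. if b x y \<noteq> 0 then h x y else 0) + (\<Sum>x\<in>Q. finner (d x) (\<phi> x) (W x (f x)))"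
    unfolding swap using W_adj[OF sec_fib[OF ps] sec_fib[OF f]] by simp
  also have "\<dots> = (\<Sum>x\<in>Q. (\<Sum>y\<in>{y. b x y \<noteq> 0}. complex_of_real (b x y) * finner (d x) (\<phi> x) (f x))
       - (\<Sum>y\<in>Q. if b x y \<noteq> 0 then h x y else 0) + finner (d x) (\<phi> x) (W x (f x)))"
    by (simp add: sum.distrib sum_subtractf)
  also have "\<dots> = (\<Sum>x\<in>Q. finner (d x) (\<phi> x) (Mop b \<Phi> W f x))"
    unfolding finner_M_right R1[symmetric] by (simp add: right_diff_distrib sum_subtractf)
  also have "\<dots> = pairing d \<phi> (Mop b \<Phi> W f)"
    by (rule pairing_superset[symmetric, OF fQ]) (use PQ P_def in auto)
  finally show ?thesis .
qed

end



context gM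
begin

lemma pairing_self_zero:
  assumes p: "\<phi> \<in> csections d" and z: "pairing d \<phi> \<phi> = 0"
  shows "\<phi> = (\<lambda>_ _. 0)"
proof -
  define P where "P = {x. \<phi> x \<noteq> (\<lambda>_. 0)}"
  have ps: "\<phi> \<in> sections d" and fP: "finite P" using p unfolding csections_def P_def by auto
  define r where "r = (\<lambda>x. \<Sum>i<d x. (cmod (\<phi> x i))^2)"
  have "pairing d \<phi> \<phi> = (\<Sum>x\<in>P. complex_of_real (r x))"
    unfolding pairing_def P_def[symmetric] r_def by (simp add: finner_self)
  also have "\<dots> = complex_of_real (\<Sum>x\<in>P. r x)" by simp
  finally have "(\<Sum>x\<in>P. r x) = 0" using z by (metis of_real_eq_0_iff)
  moreover have "\<forall>x\<in>P. 0 \<le> r x" unfolding r_def by (auto intro: sum_nonneg)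
  ultimately have "\<forall>x\<in>P. r x = 0" using sum_nonneg_eq_0_iff[OF fP] by blast
  then have "\<forall>x\<in>P. \<phi> x = (\<lambda>_. 0)"
  proof (intro ballI)
    fix x assume x: "x \<in> P" and rz: "\<forall>x\<in>P. r x = 0"
    have "finner (d x) (\<phi> x) (\<phi> x) = complex_of_real (r x)" unfolding r_def by (rule finner_self)
    then have "finner (d x) (\<phi> x) (\<phi> x) = 0" using rz x by simp
    then show "\<phi> x = (\<lambda>_. 0)" by (rule finner_self_zero[OF sec_fib[OF ps]])
  qed
  then have "P = {}" unfolding P_def by auto
  then show ?thesis unfolding P_def by (auto simp: fun_eq_iff)
qed

lemma zero_csec: "(\<lambda>_ _. 0) \<in> csections d"
  unfolding csections_def sections_def fib_def by simp

lemma comb_sec: "f \<in> sections d \<Longrightarrow> h \<in> sections d \<Longrightarrow> (\<lambda>x i. a * f x i + c * h x i) \<in> sections d"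
  unfolding sections_def fib_def by auto

lemma comb_csec: "f \<in> csections d \<Longrightarrow> h \<in> csections d \<Longrightarrow> (\<lambda>x i. a * f x i + c * h x i) \<in> csections d"
proof -
  assume f: "f \<in> csections d" and h: "h \<in> csections d"
  have "{x. (\<lambda>i. a * f x i + c * h x i) \<noteq> (\<lambda>_. 0)} \<subseteq> {x. f x \<noteq> (\<lambda>_. 0)} \<union> {x. h x \<noteq> (\<lambda>_. 0)}"
    by auto
  then have "finite {x. (\<lambda>i. a * f x i + c * h x i) \<noteq> (\<lambda>_. 0)}"
    using f h unfolding csections_def by (auto intro: finite_subset)
  then show ?thesis using f h comb_sec unfolding csections_def by auto
qed

lemma fin_surj:
  assumes inj: "inj_on (Mop b \<Phi> W) (csections d)" and g: "g \<in> sections d" and K: "finite K"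
  shows "\<exists>s\<in>sections d. \<forall>y\<in>K. Mop b \<Phi> W s y = g y"
proof -
  define C where "C = Sigma K (\<lambda>y. {..<d y})"
  define Rm where "Rm = (\<lambda>s. \<lambda>(y,i). if y \<in> K then Mop b \<Phi> W s y i else 0)"
  define R where "R = Rm ` sections d"
  have fC: "finite C" unfolding C_def using K by auto
  have R0: "(\<lambda>_. 0) \<in> R"
  proof -
    have "Rm (\<lambda>_ _. 0) = (\<lambda>_. 0)" unfolding Rm_def M_zero by auto
    then show ?thesis unfolding R_def using zero_csec unfolding csections_def by force
  qed
  have Rcl: "\<forall>r\<in>R. \<forall>s\<in>R. \<forall>a::complex. (\<lambda>c. r c + a * s c) \<in> R"
  proof (intro ballI allI)
    fix r s a assume "r \<in> R" "s \<in> R"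
    then obtain s1 s2 where s: "s1 \<in> sections d" "s2 \<in> sections d" "r = Rm s1" "s = Rm s2"
      unfolding R_def by auto
    have eq: "Rm (\<lambda>x i. 1 * s1 x i + a * s2 x i) = (\<lambda>c. r c + a * s c)"
      unfolding s Rm_def M_lin[OF s(1,2)] by auto
    show "(\<lambda>c. r c + a * s c) \<in> R" unfolding R_def
      using image_eqI[where f=Rm, OF eq[symmetric] comb_sec[OF s(1,2), of 1 a]] by simp
  qed
  have Rv: "\<forall>r\<in>R. \<forall>c. c \<notin> C \<longrightarrow> r c = 0"
  proof (intro ballI allI impI)
    fix r c assume "r \<in> R" "c \<notin> C"
    then obtain s where s: "s \<in> sections d" "r = Rm s" unfolding R_def by auto
    obtain y i where c: "c = (y, i)" by (cases c)
    show "r c = 0"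
      using M_sections[OF s(1)] \<open>c \<notin> C\<close> unfolding s c Rm_def C_def sections_def fib_def by auto
  qed
  have all: "\<forall>v. (\<forall>c. c \<notin> C \<longrightarrow> v c = 0) \<longrightarrow> v \<in> R"
  proof (rule ccontr)
    assume "\<not> ?thesis"
    from annih[OF fC R0 Rcl Rv this] obtain \<phi> where \<phi>: "\<forall>c. c \<notin> C \<longrightarrow> \<phi> c = 0" "\<phi> \<noteq> (\<lambda>_. 0)"
      "\<forall>r\<in>R. (\<Sum>c\<in>C. \<phi> c * r c) = 0" by blast
    define \<psi> where "\<psi> = (\<lambda>y i. cnj (\<phi> (y, i)))"
    have \<psi>s: "\<psi> \<in> sections d" unfolding sections_def fib_def \<psi>_def using \<phi>(1) unfolding C_def by auto
    have \<psi>K: "{x. \<psi> x \<noteq> (\<lambda>_. 0)} \<subseteq> K" unfolding \<psi>_def using \<phi>(1) unfolding C_def by (auto simp: fun_eq_iff)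
    have \<psi>c: "\<psi> \<in> csections d" unfolding csections_def using \<psi>s \<psi>K K finite_subset by auto
    have pz: "pairing d \<psi> (Mop b \<Phi> W s) = 0" if s: "s \<in> sections d" for s
    proof -
      have "pairing d \<psi> (Mop b \<Phi> W s) = (\<Sum>y\<in>K. finner (d y) (\<psi> y) (Mop b \<Phi> W s y))"
        by (rule pairing_superset[OF K \<psi>K])
      also have "\<dots> = (\<Sum>y\<in>K. \<Sum>i<d y. \<phi> (y, i) * Rm s (y, i))"
        unfolding finner_def \<psi>_def Rm_def by (intro sum.cong) auto
      also have "\<dots> = (\<Sum>c\<in>C. \<phi> c * Rm s c)"
        unfolding C_def by (subst sum.Sigma) (use K in auto)
      also have "\<dots> = 0" using \<phi>(3) s unfolding R_def by auto
      finally show ?thesis .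
    qed
    have Mc: "Mop b \<Phi> W \<psi> \<in> csections d" by (rule M_csections[OF \<psi>c])
    then have Ms: "Mop b \<Phi> W \<psi> \<in> sections d" unfolding csections_def by auto
    have "pairing d (Mop b \<Phi> W \<psi>) (Mop b \<Phi> W \<psi>) = 0"
      using pairing_M[OF \<psi>c Ms] pz[OF Ms] by simp
    then have "Mop b \<Phi> W \<psi> = (\<lambda>_ _. 0)" by (rule pairing_self_zero[OF Mc])
    then have "Mop b \<Phi> W \<psi> = Mop b \<Phi> W (\<lambda>_ _. 0)" using M_zero by simp
    then have "\<psi> = (\<lambda>_ _. 0)" using inj \<psi>c zero_csec unfolding inj_on_def by blast
    then have "\<phi> = (\<lambda>_. 0)" unfolding \<psi>_def by (auto simp: fun_eq_iff)
    then show False using \<phi>(2) by simp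
  qed
  define v where "v = (\<lambda>(y,i). if y \<in> K then g y i else 0)"
  have "\<forall>c. c \<notin> C \<longrightarrow> v c = 0"
  proof (intro allI impI)
    fix c assume "c \<notin> C"
    obtain y i where c: "c = (y, i)" by (cases c)
    show "v c = 0" using g \<open>c \<notin> C\<close> unfolding c v_def C_def sections_def fib_def by auto
  qed
  then have "v \<in> R" using all by blast
  then obtain s where s: "s \<in> sections d" "Rm s = v" unfolding R_def by auto
  have "\<forall>y\<in>K. Mop b \<Phi> W s y = g y"
  proof (intro ballI ext)
    fix y i assume "y \<in> K"
    then show "Mop b \<Phi> W s y i = g y i" using fun_cong[OF s(2), of "(y,i)"] unfolding Rm_def v_def by auto
  qed
  then show ?thesis using s by blast
qed

end



lemma surj_from_inj:
  fixes b :: "'x::countable \<Rightarrow> 'x \<Rightarrow> real"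
  assumes gm: "gM b d \<Phi> W"
    and inj: "inj_on (Mop b \<Phi> W) (csections d)" and g: "g \<in> sections d"
  shows "\<exists>f\<in>sections d. Mop b \<Phi> W f = g"
proof -
  interpret gM b d \<Phi> W by (rule gm)
  define K where "K = (\<lambda>m. {y::'x. to_nat y < m})"
  define S where "S = (\<lambda>n. {s \<in> sections d. \<forall>y\<in>K n. Mop b \<Phi> W s y = g y})"
  define good where "good = (\<lambda>m t. t \<in> sections d \<and> (\<forall>n. \<exists>s\<in>S n. \<forall>y\<in>K m. s y = t y))"
  have fK: "finite (K m)" for m
  proof -
    have "K m = to_nat -` {..<m}" unfolding K_def by auto
    then show ?thesis using finite_vimageI[of "{..<m}" to_nat] by simp
  qed
  have Kmono: "K m \<subseteq> K n" if "m \<le> n" for m n using that unfolding K_def by auto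
  have Sne: "\<exists>s\<in>S n. True" for n
    using fin_surj[OF inj g fK[of n]] unfolding S_def by auto
  have step: "\<exists>t'. good (Suc m) t' \<and> (\<forall>y\<in>K m. t' y = t y)" if gt: "good m t" for m t
  proof -
    define C where "C = Sigma (K (Suc m)) (\<lambda>y. {..<d y})"
    define Rs where "Rs = (\<lambda>s::'x \<Rightarrow> nat \<Rightarrow> complex. \<lambda>(y,i). if y \<in> K (Suc m) then s y i else 0)"
    define A where "A = (\<lambda>n. Rs ` {s \<in> S n. \<forall>y\<in>K m. s y = t y})"
    have fC: "finite C" unfolding C_def using fK by auto
    have ne: "\<forall>n. A n \<noteq> {}" using gt unfolding good_def A_def by auto
    have dec: "\<forall>n. A (Suc n) \<subseteq> A n" unfolding A_def S_def using Kmono[of n "Suc n" for n] by auto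
    have aff: "\<forall>n. \<forall>v\<in>A n. \<forall>w\<in>A n. \<forall>\<tau>. (\<lambda>c. v c + \<tau> * (w c - v c)) \<in> A n"
    proof (intro allI ballI)
      fix n v w \<tau> assume "v \<in> A n" "w \<in> A n"
      then obtain s1 s2 where s: "s1 \<in> S n" "\<forall>y\<in>K m. s1 y = t y" "v = Rs s1"
        "s2 \<in> S n" "\<forall>y\<in>K m. s2 y = t y" "w = Rs s2" unfolding A_def by auto
      define s3 where "s3 = (\<lambda>x i. (1 - \<tau>) * s1 x i + \<tau> * s2 x i)"
      have sec: "s1 \<in> sections d" "s2 \<in> sections d" using s unfolding S_def by auto
      have s3s: "s3 \<in> sections d" unfolding s3_def by (rule comb_sec[OF sec])
      have s3g: "\<forall>y\<in>K n. Mop b \<Phi> W s3 y = g y"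
      proof
        fix y assume "y \<in> K n"
        then have "Mop b \<Phi> W s1 y = g y" "Mop b \<Phi> W s2 y = g y" using s unfolding S_def by auto
        then show "Mop b \<Phi> W s3 y = g y" unfolding s3_def M_lin[OF sec]
          by (auto simp: fun_eq_iff algebra_simps)
      qed
      have s3t: "\<forall>y\<in>K m. s3 y = t y" using s unfolding s3_def by (auto simp: fun_eq_iff algebra_simps)
      have eq: "Rs s3 = (\<lambda>c. v c + \<tau> * (w c - v c))"
        unfolding s3_def s Rs_def by (auto simp: fun_eq_iff algebra_simps)
      have s3in: "s3 \<in> {s \<in> S n. \<forall>y\<in>K m. s y = t y}" using s3s s3g s3t unfolding S_def by auto
      show "(\<lambda>c. v c + \<tau> * (w c - v c)) \<in> A n" unfolding A_def
        using image_eqI[where f=Rs, OF eq[symmetric] s3in] by simp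
    qed
    have van: "\<forall>v\<in>A n. \<forall>c. c \<notin> C \<longrightarrow> v c = 0" for n
    proof (intro ballI allI impI)
      fix v c assume "v \<in> A n" "c \<notin> C"
      then obtain s where s: "s \<in> S n" "v = Rs s" unfolding A_def by auto
      obtain y i where c: "c = (y, i)" by (cases c)
      show "v c = 0" using s \<open>c \<notin> C\<close> unfolding c Rs_def C_def S_def sections_def fib_def by auto
    qed
    have agr: "\<forall>v\<in>A 0. \<forall>w\<in>A 0. \<forall>c. c \<notin> C \<longrightarrow> v c = w c" by (metis van)
    obtain v where v: "\<forall>n. v \<in> A n" using affine_inter[OF fC ne dec aff agr] by blast
    define t' where "t' = (\<lambda>y i. v (y, i))"
    have ext: "\<exists>s\<in>S n. (\<forall>y\<in>K m. s y = t y) \<and> (\<forall>y\<in>K (Suc m). s y = t' y)" for n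
    proof -
      obtain s where s: "s \<in> S n" "\<forall>y\<in>K m. s y = t y" "v = Rs s" using v[rule_format, of n] unfolding A_def by auto
      have "\<forall>y\<in>K (Suc m). s y = t' y" unfolding t'_def s(3) Rs_def by auto
      then show ?thesis using s by blast
    qed
    have "t' \<in> sections d"
    proof -
      obtain s where s: "s \<in> S 0" "v = Rs s" using v[rule_format, of 0] unfolding A_def by auto
      then show ?thesis unfolding t'_def Rs_def S_def sections_def fib_def by auto
    qed
    moreover have "\<forall>y\<in>K m. t' y = t y"
      using ext[of 0] Kmono[of m "Suc m"] by force
    ultimately show ?thesis unfolding good_def using ext by blast
  qed
  define T where "T = rec_nat (\<lambda>_ _. 0) (\<lambda>m t. SOME t'. good (Suc m) t' \<and> (\<forall>y\<in>K m. t' y = t y))"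
  have T0: "T 0 = (\<lambda>_ _. 0)" unfolding T_def by simp
  have TS: "T (Suc m) = (SOME t'. good (Suc m) t' \<and> (\<forall>y\<in>K m. t' y = T m y))" for m
    unfolding T_def by simp
  have goodT: "good m (T m) \<and> (\<forall>y\<in>K m. T (Suc m) y = T m y)" for m
  proof (induction m)
    case 0
    have "good 0 (T 0)" unfolding T0 good_def K_def using Sne zero_csec unfolding csections_def by auto
    then show ?case using someI_ex[OF step[of 0 "T 0"]] unfolding TS by blast
  next
    case (Suc m)
    then have "good (Suc m) (T (Suc m))" using someI_ex[OF step[of m "T m"]] unfolding TS by blast
    then show ?case using someI_ex[OF step[of "Suc m" "T (Suc m)"]] unfolding TS by blast
  qed
  have compat: "\<forall>y\<in>K m. T (m + k) y = T m y" for m k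
  proof (induction k)
    case 0 then show ?case by simp
  next
    case (Suc k)
    then show ?case using goodT[of "m + k"] Kmono[of m "m + k"] by auto
  qed
  define f where "f = (\<lambda>y. T (Suc (to_nat y)) y)"
  have fT: "f y = T m y" if "y \<in> K m" for y m
  proof -
    have le: "Suc (to_nat y) \<le> m" using that unfolding K_def by auto
    have "y \<in> K (Suc (to_nat y))" unfolding K_def by auto
    then show ?thesis using compat[of "Suc (to_nat y)" "m - Suc (to_nat y)"] le unfolding f_def by auto
  qed
  have fs: "f \<in> sections d"
    using goodT unfolding f_def good_def sections_def by auto
  have "Mop b \<Phi> W f x = g x" for x
  proof -
    define m where "m = Suc (Max (to_nat ` insert x {y. b x y \<noteq> 0}))"
    have fin: "finite (to_nat ` insert x {y. b x y \<noteq> 0})" using nbr_finite by auto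
    have inK: "y \<in> K m" if "y = x \<or> b x y \<noteq> 0" for y
    proof -
      have "to_nat y \<le> Max (to_nat ` insert x {y. b x y \<noteq> 0})" using that by (intro Max_ge[OF fin]) auto
      then show ?thesis unfolding K_def m_def by auto
    qed
    obtain s where s: "s \<in> S m" "\<forall>y\<in>K m. s y = T m y" using goodT[of m] unfolding good_def by blast
    have "Mop b \<Phi> W f x = Mop b \<Phi> W s x"
      by (rule M_local) (use inK fT s(2) in auto)
    also have "\<dots> = g x" using s(1) inK[of x] unfolding S_def by auto
    finally show ?thesis .
  qed
  then show ?thesis using fs by blast
qed

theorem lemma4p2:
  fixes b :: "'x::countable \<Rightarrow> 'x \<Rightarrow> real"
    and d :: "'x \<Rightarrow> nat"
    and \<Phi> :: "'x \<Rightarrow> 'x \<Rightarrow> (nat \<Rightarrow> complex) \<Rightarrow> (nat \<Rightarrow> complex)"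
    and W :: "'x \<Rightarrow> (nat \<Rightarrow> complex) \<Rightarrow> (nat \<Rightarrow> complex)"
  assumes "locally_finite_graph b"
    and "connection b d \<Phi>"
    and "selfadj_endo d W"
  shows "Mop b \<Phi> W ` sections d \<subseteq> sections d
       \<and> continuous_on (sections d) (Mop b \<Phi> W)
       \<and> (\<forall>\<phi>\<in>csections d. Mop b \<Phi> W \<phi> \<in> csections d
            \<and> (\<forall>f\<in>sections d. pairing d (Mop b \<Phi> W \<phi>) f = pairing d \<phi> (Mop b \<Phi> W f)))
       \<and> (Mop b \<Phi> W ` sections d = sections d \<longleftrightarrow> inj_on (Mop b \<Phi> W) (csections d))"
proof -
  interpret gM b d \<Phi> W using assms by unfold_locales
  have P1: "Mop b \<Phi> W ` sections d \<subseteq> sections d" using M_sections by auto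
  have P3: "\<forall>\<phi>\<in>csections d. Mop b \<Phi> W \<phi> \<in> csections d
            \<and> (\<forall>f\<in>sections d. pairing d (Mop b \<Phi> W \<phi>) f = pairing d \<phi> (Mop b \<Phi> W f))"
    using M_csections pairing_M by auto
  have P4: "Mop b \<Phi> W ` sections d = sections d \<longleftrightarrow> inj_on (Mop b \<Phi> W) (csections d)"
  proof
    assume su: "Mop b \<Phi> W ` sections d = sections d"
    show "inj_on (Mop b \<Phi> W) (csections d)"
    proof (rule inj_onI)
      fix \<phi>1 \<phi>2 assume p1: "\<phi>1 \<in> csections d" and p2: "\<phi>2 \<in> csections d"
        and eq: "Mop b \<Phi> W \<phi>1 = Mop b \<Phi> W \<phi>2"
      define \<psi> where "\<psi> = (\<lambda>x i. 1 * \<phi>1 x i + (-1) * \<phi>2 x i)"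
      have \<psi>c: "\<psi> \<in> csections d" unfolding \<psi>_def by (rule comb_csec[OF p1 p2])
      have s1: "\<phi>1 \<in> sections d" and s2: "\<phi>2 \<in> sections d" using p1 p2 unfolding csections_def by auto
      have M\<psi>: "Mop b \<Phi> W \<psi> = (\<lambda>_ _. 0)" unfolding \<psi>_def M_lin[OF s1 s2] eq by simp
      have "\<psi> \<in> sections d" using \<psi>c unfolding csections_def by auto
      then obtain f where f: "f \<in> sections d" "Mop b \<Phi> W f = \<psi>" using su by force
      have "pairing d \<psi> \<psi> = pairing d (Mop b \<Phi> W \<psi>) f" using pairing_M[OF \<psi>c f(1)] f(2) by simp
      also have "\<dots> = 0" unfolding M\<psi> pairing_def by simp
      finally have "\<psi> = (\<lambda>_ _. 0)" by (rule pairing_self_zero[OF \<psi>c])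
      then show "\<phi>1 = \<phi>2" unfolding \<psi>_def by (auto simp: fun_eq_iff)
    qed
  next
    assume inj: "inj_on (Mop b \<Phi> W) (csections d)"
    have "sections d \<subseteq> Mop b \<Phi> W ` sections d"
    proof
      fix g assume "g \<in> sections d"
      from surj_from_inj[OF gM_axioms inj this] show "g \<in> Mop b \<Phi> W ` sections d" by force
    qed
    then show "Mop b \<Phi> W ` sections d = sections d" using P1 by blast
  qed
  show ?thesis using P1 M_cont P3 P4 by blast
qed

end
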